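(* Let $G$ be the directed graph with distinct vertices $v_1,v_2,\dots$ and $w_1,w_2,\dots$, and edges $v_i\to v_{i+1}$ and $w_i\to v_i$ for all $i\ge1$ (so each $w_i$ is parentless with lone child $v_i$), with birthdates $t(v_i)=i$ and $t(w_i)=i-\tfrac12$. Then $(G,t)$ is an infinite biosphere, and $v_1$ does not belong to any maximal element of $\mathrm{IAP}\cap\mathrm{CONV}\cap\mathrm{REF}$.
   Context: An infinite biosphere is a directed graph $G$ together with a function $t$ assigning a real number $t(v)$ to each vertex, such that: (1) if $v$ is a parent of $w$ (edge from $v$ to $w$) then $t(v)<t(w)$; (2) for every $r\in\mathbb R$ at most finitely many vertices $v$ have $t(v)<r$; (3) every vertex has finitely many children; (4) $G$ is infinite. $v$ is an ancestor of $w$ (and $w$ a descendant of $v$) if there is a directed path $v=v_1,\dots,v_n=w$ with $n>1$. $\mathrm{IAP}$: sets $S$ of vertices such that no $v\in S$ has both infinitely many descendants in $S$ and infinitely many non-descendants in $S$. $\mathrm{CONV}$: sets $S$ such that every vertex having an ancestor in $S$ and a descendant in $S$ lies in $S$. $\mathrm{REF}$: sets $S$ such that every $v\in S$ with infinitely many descendants in $G$ has infinitely many descendants in $S$. A maximal element of a family of sets is a member not properly contained in any other member. *)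

theory Defs
  imports Complex_Main
begin

text \<open>A directed graph is given by a vertex set VS and an edge relation E
  (E v w means: v is a parent of w, i.e. there is an edge from v to w).\<close>

definition infinite_biosphere :: "'a set \<Rightarrow> ('a \<Rightarrow> 'a \<Rightarrow> bool) \<Rightarrow> ('a \<Rightarrow> real) \<Rightarrow> bool" where
  "infinite_biosphere VS E t \<longleftrightarrow>
     (\<forall>v w. E v w \<longrightarrow> v \<in> VS \<and> w \<in> VS) \<and>
     (\<forall>v w. E v w \<longrightarrow> t v < t w) \<and>
     (\<forall>r::real. finite {v \<in> VS. t v < r}) \<and>
     (\<forall>v \<in> VS. finite {w. E v w}) \<and>
     infinite VS"

definition ancestor :: "('a \<Rightarrow> 'a \<Rightarrow> bool) \<Rightarrow> 'a \<Rightarrow> 'a \<Rightarrow> bool" where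
  "ancestor E v w \<longleftrightarrow> (v, w) \<in> {(a, b). E a b}\<^sup>+"

definition descendants :: "('a \<Rightarrow> 'a \<Rightarrow> bool) \<Rightarrow> 'a \<Rightarrow> 'a set" where
  "descendants E v = {w. ancestor E v w}"

definition IAP :: "'a set \<Rightarrow> ('a \<Rightarrow> 'a \<Rightarrow> bool) \<Rightarrow> 'a set set" where
  "IAP VS E = {S. S \<subseteq> VS \<and>
     (\<forall>v \<in> S. \<not> (infinite (descendants E v \<inter> S) \<and> infinite (S - descendants E v)))}"

definition CONV :: "'a set \<Rightarrow> ('a \<Rightarrow> 'a \<Rightarrow> bool) \<Rightarrow> 'a set set" where
  "CONV VS E = {S. S \<subseteq> VS \<and>
     (\<forall>x \<in> VS. (\<exists>a \<in> S. ancestor E a x) \<and> (\<exists>d \<in> S. ancestor E x d) \<longrightarrow> x \<in> S)}"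

definition REF :: "'a set \<Rightarrow> ('a \<Rightarrow> 'a \<Rightarrow> bool) \<Rightarrow> 'a set set" where
  "REF VS E = {S. S \<subseteq> VS \<and>
     (\<forall>v \<in> S. infinite (descendants E v) \<longrightarrow> infinite (descendants E v \<inter> S))}"

definition maximal_in :: "'a set set \<Rightarrow> 'a set \<Rightarrow> bool" where
  "maximal_in F S \<longleftrightarrow> S \<in> F \<and> \<not> (\<exists>T \<in> F. S \<subset> T)"

datatype vtx = Vv nat | Ww nat

definition exVS :: "vtx set" where
  "exVS = {Vv i | i. i \<ge> 1} \<union> {Ww i | i. i \<ge> 1}"

definition exE :: "vtx \<Rightarrow> vtx \<Rightarrow> bool" where
  "exE x y \<longleftrightarrow> (\<exists>i \<ge> 1. x = Vv i \<and> y = Vv (i + 1)) \<or> (\<exists>i \<ge> 1. x = Ww i \<and> y = Vv i)"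

fun ext :: "vtx \<Rightarrow> real" where
  "ext (Vv i) = real i"
| "ext (Ww i) = real i - 1/2"

end

theory Submission
  imports Defs
begin

lemma vv_chain: "1 \<le> i \<Longrightarrow> (Vv i, Vv (i + Suc k)) \<in> {(a, b). exE a b}\<^sup>+"
proof (induction k)
  case 0 then show ?case by (auto simp: exE_def)
next
  case (Suc k)
  have "(Vv (i + Suc k), Vv (i + Suc (Suc k))) \<in> {(a, b). exE a b}"
    using Suc.prems by (auto simp: exE_def)
  with Suc show ?case by (meson trancl_into_trancl)
qed

lemma anc_iff: "ancestor exE x y \<longleftrightarrow>
   (\<exists>i j. x = Vv i \<and> y = Vv j \<and> 1 \<le> i \<and> i < j) \<or> (\<exists>i j. x = Ww i \<and> y = Vv j \<and> 1 \<le> i \<and> i \<le> j)"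
proof
  assume "ancestor exE x y"
  then have "(x, y) \<in> {(a, b). exE a b}\<^sup>+" by (simp add: ancestor_def)
  then show "(\<exists>i j. x = Vv i \<and> y = Vv j \<and> 1 \<le> i \<and> i < j) \<or> (\<exists>i j. x = Ww i \<and> y = Vv j \<and> 1 \<le> i \<and> i \<le> j)"
    by (induction rule: trancl_induct) (auto simp: exE_def)
next
  have vv: "(Vv i, Vv j) \<in> {(a, b). exE a b}\<^sup>+" if "1 \<le> i" "i < j" for i j
    using vv_chain[OF that(1), of "j - i - 1"] that by simp
  assume "(\<exists>i j. x = Vv i \<and> y = Vv j \<and> 1 \<le> i \<and> i < j) \<or> (\<exists>i j. x = Ww i \<and> y = Vv j \<and> 1 \<le> i \<and> i \<le> j)"
  then show "ancestor exE x y"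
  proof
    assume "\<exists>i j. x = Vv i \<and> y = Vv j \<and> 1 \<le> i \<and> i < j"
    then show ?thesis using vv by (auto simp: ancestor_def)
  next
    assume "\<exists>i j. x = Ww i \<and> y = Vv j \<and> 1 \<le> i \<and> i \<le> j"
    then obtain i j where h: "x = Ww i" "y = Vv j" "1 \<le> i" "i \<le> j" by blast
    have e: "(Ww i, Vv i) \<in> {(a, b). exE a b}" using h by (auto simp: exE_def)
    show ?thesis
    proof (cases "i = j")
      case True then show ?thesis using e h by (auto simp: ancestor_def)
    next
      case False
      then have "(Vv i, Vv j) \<in> {(a, b). exE a b}\<^sup>+" using vv h by simp
      then show ?thesis using e h unfolding ancestor_def by (meson trancl_into_trancl2)
    qed
  qed
qed

lemma anc_target: "ancestor exE x y \<Longrightarrow> \<exists>j\<ge>1. y = Vv j"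
  by (auto simp: anc_iff)

lemma desc_Vv: "1 \<le> i \<Longrightarrow> descendants exE (Vv i) = Vv ` {i<..}"
  by (auto simp: descendants_def anc_iff)

lemma desc_Ww: "1 \<le> i \<Longrightarrow> descendants exE (Ww i) = Vv ` {i..}"
  by (auto simp: descendants_def anc_iff)

lemma inf_desc: "v \<in> exVS \<Longrightarrow> infinite (descendants exE v)"
proof -
  assume "v \<in> exVS"
  then obtain i where "1 \<le> i" "v = Vv i \<or> v = Ww i" by (auto simp: exVS_def)
  moreover have "infinite (Vv ` {i<..})" "infinite (Vv ` {i..})"
    using finite_imageD[of Vv "{i<..}"] finite_imageD[of Vv "{i..}"] infinite_Ioi[of i] infinite_Ici[of i]
    by (auto simp: inj_on_def)
  ultimately show ?thesis using desc_Vv desc_Ww by auto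
qed

fun idx :: "vtx \<Rightarrow> nat" where
  "idx (Vv i) = i" | "idx (Ww i) = i"

lemma good:
  assumes T: "T \<subseteq> exVS" and V: "\<forall>j\<ge>1. Vv j \<in> T" and W: "finite {i. Ww i \<in> T}"
  shows "T \<in> IAP exVS exE \<inter> CONV exVS exE \<inter> REF exVS exE"
proof -
  have fin: "finite (T - descendants exE v)" if vin: "v \<in> exVS" for v
  proof -
    have "T - descendants exE v \<subseteq> Vv ` {..idx v} \<union> Ww ` {i. Ww i \<in> T}"
    proof
      fix x assume x: "x \<in> T - descendants exE v"
      show "x \<in> Vv ` {..idx v} \<union> Ww ` {i. Ww i \<in> T}"
      proof (cases x)
        case (Vv j)
        have "j \<le> idx v"
        proof (rule ccontr)
          assume "\<not> j \<le> idx v"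
          moreover obtain i where "1 \<le> i" "v = Vv i \<or> v = Ww i" using vin by (auto simp: exVS_def)
          ultimately have "x \<in> descendants exE v" using Vv desc_Vv desc_Ww by auto
          with x show False by simp
        qed
        then show ?thesis using Vv by auto
      next
        case (Ww j) then show ?thesis using x by auto
      qed
    qed
    moreover have "finite (Vv ` {..idx v} \<union> Ww ` {i. Ww i \<in> T})" using W by simp
    ultimately show ?thesis by (rule finite_subset)
  qed
  have "T \<in> IAP exVS exE" using T fin by (auto simp: IAP_def)
  moreover have "T \<in> CONV exVS exE" using T V by (auto simp: CONV_def dest!: anc_target)
  moreover have "T \<in> REF exVS exE"
  proof -
    have "descendants exE v \<subseteq> T" for v
      using V by (auto simp: descendants_def dest!: anc_target)
    then have "descendants exE v \<inter> T = descendants exE v" for v by blast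
    then show ?thesis using T inf_desc by (auto simp: REF_def)
  qed
  ultimately show ?thesis by blast
qed

lemma biosphere: "infinite_biosphere exVS exE ext"
proof -
  have "finite {v \<in> exVS. ext v < r}" for r :: real
  proof -
    have "{v \<in> exVS. ext v < r} \<subseteq> Vv ` {..nat \<lceil>r\<rceil>} \<union> Ww ` {..nat \<lceil>r\<rceil> + 1}"
    proof
      fix v assume v: "v \<in> {v \<in> exVS. ext v < r}"
      show "v \<in> Vv ` {..nat \<lceil>r\<rceil>} \<union> Ww ` {..nat \<lceil>r\<rceil> + 1}"
      proof (cases v)
        case (Vv i)
        then have "real i < r" using v by simp
        then have "i \<le> nat \<lceil>r\<rceil>" by linarith
        then show ?thesis using Vv by auto
      next
        case (Ww i)
        then have "real i - 1/2 < r" using v by simp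
        then have "i \<le> nat \<lceil>r\<rceil> + 1" by linarith
        then show ?thesis using Ww by auto
      qed
    qed
    then show ?thesis by (rule finite_subset) simp
  qed
  moreover have "finite {w. exE v w}" for v
  proof -
    have "{w. exE v w} \<subseteq> {Vv (idx v + 1), Vv (idx v)}"
      by (auto simp: exE_def)
    then show ?thesis by (rule finite_subset) simp
  qed
  moreover have "infinite exVS"
  proof
    assume "finite exVS"
    then have "finite (Vv ` {1..})" by (rule finite_subset[rotated]) (auto simp: exVS_def)
    then have "finite {1::nat..}" using finite_imageD[of Vv] by (auto simp: inj_on_def)
    then show False using infinite_Ici[of "1::nat"] by simp
  qed
  moreover have "\<forall>v w. exE v w \<longrightarrow> v \<in> exVS \<and> w \<in> exVS" by (auto simp: exE_def exVS_def)
  moreover have "\<forall>v w. exE v w \<longrightarrow> ext v < ext w" by (auto simp: exE_def)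
  ultimately show ?thesis by (auto simp: infinite_biosphere_def)
qed

theorem mainTheorem11:
  shows "infinite_biosphere exVS exE ext \<and>
    \<not> (\<exists>S. maximal_in (IAP exVS exE \<inter> CONV exVS exE \<inter> REF exVS exE) S \<and> Vv 1 \<in> S)"
proof (intro conjI notI biosphere)
  assume "\<exists>S. maximal_in (IAP exVS exE \<inter> CONV exVS exE \<inter> REF exVS exE) S \<and> Vv 1 \<in> S"
  then obtain S where m: "maximal_in (IAP exVS exE \<inter> CONV exVS exE \<inter> REF exVS exE) S"
    and v1: "Vv 1 \<in> S" by blast
  have Ssub: "S \<subseteq> exVS" and iap: "\<forall>v \<in> S. \<not> (infinite (descendants exE v \<inter> S) \<and> infinite (S - descendants exE v))"
    and conv: "\<forall>x \<in> exVS. (\<exists>a \<in> S. ancestor exE a x) \<and> (\<exists>d \<in> S. ancestor exE x d) \<longrightarrow> x \<in> S"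
    and ref: "\<forall>v \<in> S. infinite (descendants exE v) \<longrightarrow> infinite (descendants exE v \<inter> S)"
    using m by (auto simp: maximal_in_def IAP_def CONV_def REF_def)
  have v1in: "Vv 1 \<in> exVS" by (auto simp: exVS_def)
  have inf1: "infinite (descendants exE (Vv 1) \<inter> S)" using ref v1 inf_desc[OF v1in] by blast
  have allV: "\<forall>j\<ge>1. Vv j \<in> S"
  proof (intro allI impI)
    fix j :: nat assume j: "1 \<le> j"
    have "\<not> (descendants exE (Vv 1) \<inter> S \<subseteq> Vv ` {..j})"
      using inf1 finite_subset by blast
    then obtain k where k: "Vv k \<in> S" "1 < k" "j < k"
      using desc_Vv[of 1] by (force simp: not_less)
    show "Vv j \<in> S"
    proof (cases "j = 1")
      case True then show ?thesis using v1 by simp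
    next
      case False
      have "ancestor exE (Vv 1) (Vv j)" "ancestor exE (Vv j) (Vv k)"
        using False j k by (auto simp: anc_iff)
      moreover have "Vv j \<in> exVS" using j by (auto simp: exVS_def)
      ultimately show ?thesis using conv v1 k by blast
    qed
  qed
  have "finite (S - descendants exE (Vv 1))" using iap v1 inf1 by blast
  moreover have "Ww ` {i. Ww i \<in> S} \<subseteq> S - descendants exE (Vv 1)"
    using desc_Vv[of 1] by auto
  ultimately have "finite (Ww ` {i. Ww i \<in> S})" using finite_subset by blast
  then have finW: "finite {i. Ww i \<in> S}" using finite_imageD[of Ww] by (auto simp: inj_on_def)
  then obtain m where mb: "\<forall>n \<in> {i. Ww i \<in> S}. n < m" using finite_nat_set_iff_bounded by blast
  define T where "T = insert (Ww (m + 1)) S"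
  have notin: "Ww (m + 1) \<notin> S" using mb by auto
  have "T \<in> IAP exVS exE \<inter> CONV exVS exE \<inter> REF exVS exE"
  proof (rule good)
    show "T \<subseteq> exVS" using Ssub by (auto simp: T_def exVS_def)
    show "\<forall>j\<ge>1. Vv j \<in> T" using allV by (auto simp: T_def)
    have "{i. Ww i \<in> T} = insert (m + 1) {i. Ww i \<in> S}" by (auto simp: T_def)
    then show "finite {i. Ww i \<in> T}" using finW by simp
  qed
  moreover have "S \<subset> T" using notin by (auto simp: T_def)
  ultimately show False using m by (auto simp: maximal_in_def)
qed

end
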